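(* Fix $\eta>0$, $\lambda\in\mathbb{R}^{2md}$ and $i\in V$, and let $\lambda'$ be obtained from $\lambda$ by replacing, for every $e\in N_i$, the block $\lambda_{e,i}$ with $$\lambda'_{e,i}(x)=\lambda_{e,i}(x)+\frac1\eta\log S^\lambda_{e,i}(x)-\frac{1}{\eta(|N_i|+1)}\log\Big(\mu^\lambda_i(x)\prod_{e'\in N_i}S^\lambda_{e',i}(x)\Big),\quad x\in\chi,$$ all other coordinates unchanged. Then $$L(\lambda)-L(\lambda')\ \ge\ \frac{1}{8|N_i|\eta}\sum_{e\in N_i}\|\nu^\lambda_{e,i}\|_1^2.$$
   Context: Let $G=(V,E)$ be a finite undirected graph with $n=|V|$, $m=|E|$, every vertex incident to at least one edge; $N_i=\{e\in E:i\in e\}$. $\chi$ is a finite label set with $d=|\chi|\ge2$. Costs $C_i\in\mathbb{R}^\chi$, $C_e\in\mathbb{R}^{\chi^2}$; for $e=\{i,j\}$, $x_e=(x_i,x_j)$ and $(x_e)_i=x_i$. Dual variables $\lambda=(\lambda_{e,i}(x))_{e\in E,i\in e,x\in\chi}\in\mathbb{R}^{2md}$ and $$L(\lambda)=\frac1\eta\sum_{i\in V}\log\sum_{x\in\chi}\exp\Big(-\eta C_i(x)+\eta\sum_{e\in N_i}\lambda_{e,i}(x)\Big)+\frac1\eta\sum_{e\in E}\log\sum_{x_e\in\chi^2}\exp\Big(-\eta C_e(x_e)-\eta\sum_{i\in e}\lambda_{e,i}((x_e)_i)\Big).$$ $\mu^\lambda_i(x)\propto\exp(-\eta C_i(x)+\eta\sum_{e\in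 N_i}\lambda_{e,i}(x))$, $\mu^\lambda_e(x_e)\propto\exp(-\eta C_e(x_e)-\eta\sum_{i\in e}\lambda_{e,i}((x_e)_i))$, each normalized to sum to $1$; $S^\lambda_{e,i}(x)=\sum_{x_e:(x_e)_i=x}\mu^\lambda_e(x_e)$; slack $\nu^\lambda_{e,i}=S^\lambda_{e,i}-\mu^\lambda_i$. *)

theory Defs
  imports Complex_Main "HOL-Library.FuncSet"
begin

text \<open>An edge labelling x_e is a function from the edge e to X (extensional, via PiE),
  so (x_e)_i = x_e i.\<close>

definition Nb :: "'v set set \<Rightarrow> 'v \<Rightarrow> 'v set set" where
  "Nb E i = {e \<in> E. i \<in> e}"

definition edge_labs :: "'v set \<Rightarrow> 'x set \<Rightarrow> ('v \<Rightarrow> 'x) set" where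
  "edge_labs e X = PiE e (\<lambda>_. X)"

definition Ldual :: "real \<Rightarrow> 'v set \<Rightarrow> 'v set set \<Rightarrow> 'x set \<Rightarrow> ('v \<Rightarrow> 'x \<Rightarrow> real)
    \<Rightarrow> ('v set \<Rightarrow> ('v \<Rightarrow> 'x) \<Rightarrow> real) \<Rightarrow> ('v set \<Rightarrow> 'v \<Rightarrow> 'x \<Rightarrow> real) \<Rightarrow> real" where
  "Ldual eta V E X Cv Ce lam =
     (1/eta) * (\<Sum>i\<in>V. ln (\<Sum>x\<in>X. exp (- eta * Cv i x + eta * (\<Sum>e\<in>Nb E i. lam e i x))))
   + (1/eta) * (\<Sum>e\<in>E. ln (\<Sum>xe\<in>edge_labs e X. exp (- eta * Ce e xe - eta * (\<Sum>i\<in>e. lam e i (xe i)))))"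

definition mu_v :: "real \<Rightarrow> 'v set set \<Rightarrow> 'x set \<Rightarrow> ('v \<Rightarrow> 'x \<Rightarrow> real)
    \<Rightarrow> ('v set \<Rightarrow> 'v \<Rightarrow> 'x \<Rightarrow> real) \<Rightarrow> 'v \<Rightarrow> 'x \<Rightarrow> real" where
  "mu_v eta E X Cv lam i x =
     exp (- eta * Cv i x + eta * (\<Sum>e\<in>Nb E i. lam e i x))
     / (\<Sum>y\<in>X. exp (- eta * Cv i y + eta * (\<Sum>e\<in>Nb E i. lam e i y)))"

definition mu_e :: "real \<Rightarrow> 'x set \<Rightarrow> ('v set \<Rightarrow> ('v \<Rightarrow> 'x) \<Rightarrow> real)
    \<Rightarrow> ('v set \<Rightarrow> 'v \<Rightarrow> 'x \<Rightarrow> real) \<Rightarrow> 'v set \<Rightarrow> ('v \<Rightarrow> 'x) \<Rightarrow> real" where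
  "mu_e eta X Ce lam e xe =
     exp (- eta * Ce e xe - eta * (\<Sum>i\<in>e. lam e i (xe i)))
     / (\<Sum>ye\<in>edge_labs e X. exp (- eta * Ce e ye - eta * (\<Sum>i\<in>e. lam e i (ye i))))"

definition Smarg :: "real \<Rightarrow> 'x set \<Rightarrow> ('v set \<Rightarrow> ('v \<Rightarrow> 'x) \<Rightarrow> real)
    \<Rightarrow> ('v set \<Rightarrow> 'v \<Rightarrow> 'x \<Rightarrow> real) \<Rightarrow> 'v set \<Rightarrow> 'v \<Rightarrow> 'x \<Rightarrow> real" where
  "Smarg eta X Ce lam e i x = (\<Sum>xe\<in>{xe \<in> edge_labs e X. xe i = x}. mu_e eta X Ce lam e xe)"

definition slack :: "real \<Rightarrow> 'v set set \<Rightarrow> 'x set \<Rightarrow> ('v \<Rightarrow> 'x \<Rightarrow> real)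
    \<Rightarrow> ('v set \<Rightarrow> ('v \<Rightarrow> 'x) \<Rightarrow> real) \<Rightarrow> ('v set \<Rightarrow> 'v \<Rightarrow> 'x \<Rightarrow> real) \<Rightarrow> 'v set \<Rightarrow> 'v \<Rightarrow> 'x \<Rightarrow> real" where
  "slack eta E X Cv Ce lam e i x = Smarg eta X Ce lam e i x - mu_v eta E X Cv lam i x"

definition upd :: "real \<Rightarrow> 'v set set \<Rightarrow> 'x set \<Rightarrow> ('v \<Rightarrow> 'x \<Rightarrow> real)
    \<Rightarrow> ('v set \<Rightarrow> ('v \<Rightarrow> 'x) \<Rightarrow> real) \<Rightarrow> ('v set \<Rightarrow> 'v \<Rightarrow> 'x \<Rightarrow> real) \<Rightarrow> 'v
    \<Rightarrow> ('v set \<Rightarrow> 'v \<Rightarrow> 'x \<Rightarrow> real)" where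
  "upd eta E X Cv Ce lam i = (\<lambda>e j x.
     if e \<in> Nb E i \<and> j = i then
       lam e i x + (1/eta) * ln (Smarg eta X Ce lam e i x)
       - 1 / (eta * (real (card (Nb E i)) + 1))
         * ln (mu_v eta E X Cv lam i x * (\<Prod>e'\<in>Nb E i. Smarg eta X Ce lam e' i x))
     else lam e j x)"

end

theory Submission
  imports Defs "HOL-Analysis.Analysis"
begin

lemma lemA:
  fixes P :: "'j \<Rightarrow> 'x \<Rightarrow> real" and X :: "'x set" and J :: "'j set"
  assumes fX: "finite X" and fJ: "finite J" and j0: "j0 \<in> J" and cJ: "card J \<ge> 2"
    and pos: "\<And>j x. j \<in> J \<Longrightarrow> x \<in> X \<Longrightarrow> P j x > 0"
    and s1: "\<And>j. j \<in> J \<Longrightarrow> (\<Sum>x\<in>X. P j x) = 1"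
  shows "- real (card J) * ln (\<Sum>x\<in>X. (\<Prod>j\<in>J. P j x) powr (1 / real (card J)))
     \<ge> 1 / (8 * real (card (J - {j0}))) * (\<Sum>j\<in>J - {j0}. (\<Sum>x\<in>X. \<bar>P j x - P j0 x\<bar>)^2)"
proof -
  define n where "n = real (card J)"
  define K where "K = J - {j0}"
  have n2: "n \<ge> 2" using cJ n_def by simp
  have cK: "real (card K) = n - 1" unfolding K_def n_def using fJ j0 cJ
    by (simp add: card_Diff_singleton of_nat_diff)
  have fK: "finite K" using fJ K_def by simp
  define a where "a j x = sqrt \<bar>P j x\<bar>" for j x
  define h where "h j = (\<Sum>x\<in>X. (a j x - a j0 x)^2)" for j
  have aP: "(a j x)^2 = P j x" if "j \<in> J" "x \<in> X" for j x
    using pos[OF that] a_def by simp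
  have a0: "a j x \<ge> 0" for j x using a_def by simp
  have h0: "h j \<ge> 0" for j unfolding h_def by (simp add: sum_nonneg)
  define G where "G x = (\<Prod>j\<in>J. P j x) powr (1 / n)" for x
  have step1: "G x \<le> ((\<Sum>j\<in>J. a j x) / n)^2" if x: "x \<in> X" for x
  proof -
    have "(\<Prod>j\<in>J. P j x) = (\<Prod>j\<in>J. a j x) * (\<Prod>j\<in>J. a j x)"
      using aP[OF _ x] by (simp add: prod.distrib[symmetric] power2_eq_square)
    hence "G x = (\<Prod>j\<in>J. a j x) powr (1/n) * (\<Prod>j\<in>J. a j x) powr (1/n)"
      unfolding G_def by (simp add: powr_mult a0 prod_nonneg)
    moreover have "(\<Prod>j\<in>J. a j x) powr (1/n) \<le> (\<Sum>j\<in>J. a j x) / n"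
      using arith_geom_mean[of J "\<lambda>j. a j x"] fJ j0 a0 n_def
      by (auto simp: sum_divide_distrib)
    moreover have "(\<Prod>j\<in>J. a j x) powr (1/n) \<ge> 0" by simp
    ultimately show ?thesis
      using mult_mono[of "(\<Prod>j\<in>J. a j x) powr (1/n)" "(\<Sum>j\<in>J. a j x) / n"
          "(\<Prod>j\<in>J. a j x) powr (1/n)" "(\<Sum>j\<in>J. a j x) / n"]
      by (simp add: power2_eq_square)
  qed
  have step2: "((\<Sum>j\<in>J. a j x) / n)^2 \<le> (\<Sum>j\<in>J. P j x) / n - (\<Sum>j\<in>K. (a j x - a j0 x)^2) / n^2"
    if x: "x \<in> X" for x
  proof -
    define s1 where "s1 = (\<Sum>j\<in>K. a j x - a j0 x)"
    define s2 where "s2 = (\<Sum>j\<in>K. (a j x - a j0 x)^2)"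
    have e1: "(\<Sum>j\<in>J. a j x) = n * a j0 x + s1"
    proof -
      have "(\<Sum>j\<in>J. a j x) = a j0 x + (\<Sum>j\<in>K. a j x)"
        using fJ j0 K_def by (simp add: sum.remove)
      also have "(\<Sum>j\<in>K. a j x) = s1 + real (card K) * a j0 x"
        unfolding s1_def by (simp add: sum_subtractf)
      finally show ?thesis using cK by (simp add: algebra_simps)
    qed
    have e2: "(\<Sum>j\<in>J. P j x) = n * (a j0 x)^2 + 2 * a j0 x * s1 + s2"
    proof -
      have "(\<Sum>j\<in>J. P j x) = (\<Sum>j\<in>J. (a j x)^2)" using aP[OF _ x] by simp
      also have "\<dots> = (a j0 x)^2 + (\<Sum>j\<in>K. (a j x)^2)"
        using fJ j0 K_def by (simp add: sum.remove)
      also have "(\<Sum>j\<in>K. (a j x)^2) = (\<Sum>j\<in>K. (a j x - a j0 x)^2 + 2 * a j0 x * (a j x - a j0 x) + (a j0 x)^2)"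
        by (rule sum.cong) (auto simp: power2_eq_square algebra_simps)
      also have "\<dots> = s2 + 2 * a j0 x * s1 + real (card K) * (a j0 x)^2"
        unfolding s1_def s2_def by (simp add: sum.distrib sum_distrib_left)
      finally show ?thesis using cK by (simp add: algebra_simps)
    qed
    have cs: "s1^2 \<le> (n - 1) * s2"
      using Cauchy_Schwarz_ineq_sum[of "\<lambda>_. 1" "\<lambda>j. a j x - a j0 x" K] cK
      unfolding s1_def s2_def by simp
    have "((n * a j0 x + s1) / n)^2 \<le> (n * (a j0 x)^2 + 2 * a j0 x * s1 + s2) / n - s2 / n^2"
    proof -
      have "((n * a j0 x + s1) / n)^2 = (a j0 x)^2 + 2 * a j0 x * s1 / n + s1^2 / n^2"
        using n2 by (simp add: power2_eq_square field_simps)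
      moreover have "(n * (a j0 x)^2 + 2 * a j0 x * s1 + s2) / n - s2 / n^2
          = (a j0 x)^2 + 2 * a j0 x * s1 / n + ((n - 1) * s2) / n^2"
        using n2 by (simp add: power2_eq_square field_simps)
      moreover have "s1^2 / n^2 \<le> ((n - 1) * s2) / n^2"
        using cs n2 by (simp add: divide_right_mono)
      ultimately show ?thesis by linarith
    qed
    thus ?thesis using e1 e2 s2_def by simp
  qed
  have step3: "(\<Sum>x\<in>X. G x) \<le> 1 - (\<Sum>j\<in>K. h j) / n^2"
  proof -
    have "(\<Sum>x\<in>X. G x) \<le> (\<Sum>x\<in>X. (\<Sum>j\<in>J. P j x) / n - (\<Sum>j\<in>K. (a j x - a j0 x)^2) / n^2)"
      by (rule sum_mono) (use step1 step2 in fastforce)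
    also have "\<dots> = (\<Sum>j\<in>J. \<Sum>x\<in>X. P j x) / n - (\<Sum>j\<in>K. h j) / n^2"
      unfolding h_def by (simp add: sum_subtractf sum_divide_distrib[symmetric] sum.swap[of _ X])
    also have "(\<Sum>j\<in>J. \<Sum>x\<in>X. P j x) = n" using s1 n_def by simp
    finally show ?thesis using n2 by simp
  qed
  have step4: "(\<Sum>x\<in>X. \<bar>P j x - P j0 x\<bar>)^2 \<le> 4 * h j" if j: "j \<in> K" for j
  proof -
    have jJ: "j \<in> J" using j K_def by simp
    have "(\<Sum>x\<in>X. \<bar>P j x - P j0 x\<bar>) = (\<Sum>x\<in>X. \<bar>a j x - a j0 x\<bar> * (a j x + a j0 x))"
    proof (rule sum.cong)
      fix x assume x: "x \<in> X"
      have "P j x - P j0 x = (a j x - a j0 x) * (a j x + a j0 x)"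
        using aP[OF jJ x] aP[OF j0 x] by (simp add: power2_eq_square algebra_simps)
      thus "\<bar>P j x - P j0 x\<bar> = \<bar>a j x - a j0 x\<bar> * (a j x + a j0 x)"
        using a0 by (simp add: abs_mult)
    qed simp
    hence A: "(\<Sum>x\<in>X. \<bar>P j x - P j0 x\<bar>)^2 \<le> h j * (\<Sum>x\<in>X. (a j x + a j0 x)^2)"
      using Cauchy_Schwarz_ineq_sum[of "\<lambda>x. \<bar>a j x - a j0 x\<bar>" "\<lambda>x. a j x + a j0 x" X]
      unfolding h_def by simp
    have B: "(\<Sum>x\<in>X. (a j x + a j0 x)^2) \<le> (\<Sum>x\<in>X. 2 * P j x + 2 * P j0 x)"
    proof (rule sum_mono)
      fix x assume x: "x \<in> X"
      have "(a j x + a j0 x)^2 \<le> 2 * (a j x)^2 + 2 * (a j0 x)^2"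
        using zero_le_power2[of "a j x - a j0 x"] unfolding power2_diff power2_sum by linarith
      thus "(a j x + a j0 x)^2 \<le> 2 * P j x + 2 * P j0 x" using aP[OF jJ x] aP[OF j0 x] by simp
    qed
    have C: "(\<Sum>x\<in>X. 2 * P j x + 2 * P j0 x) = 4" using s1[OF jJ] s1[OF j0]
      by (simp add: sum.distrib sum_distrib_left[symmetric])
    have "h j * (\<Sum>x\<in>X. (a j x + a j0 x)^2) \<le> h j * 4"
      using B C h0[of j] by (intro mult_left_mono) auto
    with A show ?thesis by simp
  qed
  have Xne: "X \<noteq> {}" using s1[OF j0] by auto
  have Gpos: "0 < (\<Sum>x\<in>X. G x)"
    using Xne fX pos fJ unfolding G_def by (intro sum_pos) (auto intro!: prod_pos simp: less_imp_neq[OF pos, symmetric] powr_def)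
  have hs: "(\<Sum>j\<in>K. h j) \<ge> 0" by (simp add: sum_nonneg h0)
  have "ln (\<Sum>x\<in>X. G x) \<le> - (\<Sum>j\<in>K. h j) / n^2"
    using ln_le_minus_one[OF Gpos] step3 by simp
  hence L: "- n * ln (\<Sum>x\<in>X. G x) \<ge> (\<Sum>j\<in>K. h j) / n"
    using n2 by (simp add: field_simps power2_eq_square)
  have R: "1 / (8 * (n - 1)) * (\<Sum>j\<in>K. (\<Sum>x\<in>X. \<bar>P j x - P j0 x\<bar>)^2) \<le> 1 / (8 * (n - 1)) * (\<Sum>j\<in>K. 4 * h j)"
    using n2 step4 by (intro mult_left_mono sum_mono) auto
  have R2: "1 / (8 * (n - 1)) * (\<Sum>j\<in>K. 4 * h j) \<le> (\<Sum>j\<in>K. h j) / n"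
  proof -
    have e: "(\<Sum>j\<in>K. 4 * h j) = 4 * (\<Sum>j\<in>K. h j)" by (simp add: sum_distrib_left)
    have "n * (\<Sum>j\<in>K. h j) \<le> (2 * (n - 1)) * (\<Sum>j\<in>K. h j)"
      using n2 hs by (intro mult_right_mono) auto
    thus ?thesis unfolding e using n2 by (simp add: field_simps)
  qed
  have eG: "(\<Sum>x\<in>X. (\<Prod>j\<in>J. P j x) powr (1 / real (card J))) = (\<Sum>x\<in>X. G x)"
    unfolding G_def n_def ..
  have ck2: "real (card (J - {j0})) = n - 1" using cK K_def by simp
  have "1 / (8 * (n - 1)) * (\<Sum>j\<in>K. (\<Sum>x\<in>X. \<bar>P j x - P j0 x\<bar>)^2) \<le> - n * ln (\<Sum>x\<in>X. G x)"
    using L R R2 by linarith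
  thus ?thesis unfolding n_def[symmetric] K_def[symmetric] cK G_def[symmetric] .
qed

lemma aux: "(eta::real) > 0 \<Longrightarrow> c > 0 \<Longrightarrow> l + (1/eta)*a - 1/(eta*c)*b = l + (a - b/c)/eta"
  by (simp add: field_simps)

theorem lemma2:
  fixes V :: "'v set" and E :: "'v set set" and X :: "'x set"
    and Cv :: "'v \<Rightarrow> 'x \<Rightarrow> real" and Ce :: "'v set \<Rightarrow> ('v \<Rightarrow> 'x) \<Rightarrow> real"
    and lam :: "'v set \<Rightarrow> 'v \<Rightarrow> 'x \<Rightarrow> real" and eta :: real and i :: 'v
  assumes "finite V"
    and "\<forall>e\<in>E. e \<subseteq> V \<and> card e = 2"
    and "\<forall>v\<in>V. \<exists>e\<in>E. v \<in> e"
    and "finite X" and "card X \<ge> 2"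
    and "eta > 0" and "i \<in> V"
  shows "Ldual eta V E X Cv Ce lam - Ldual eta V E X Cv Ce (upd eta E X Cv Ce lam i)
     \<ge> 1 / (8 * real (card (Nb E i)) * eta)
       * (\<Sum>e\<in>Nb E i. (\<Sum>x\<in>X. \<bar>slack eta E X Cv Ce lam e i x\<bar>)^2)"
proof -
  note fV = assms(1) and Ecard = assms(2) and Vcov = assms(3) and fX = assms(4)
    and cX = assms(5) and eta = assms(6) and iV = assms(7)
  define N where "N = Nb E i"
  define k where "k = card N"
  define lam' where "lam' = upd eta E X Cv Ce lam i"
  define mu where "mu x = mu_v eta E X Cv lam i x" for x
  define S where "S e x = Smarg eta X Ce lam e i x" for e x
  define fv where "fv l v x = - eta * Cv v x + eta * (\<Sum>e\<in>Nb E v. l e v x)"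
    for l :: "'v set \<Rightarrow> 'v \<Rightarrow> 'x \<Rightarrow> real" and v x
  define ge where "ge l e xe = - eta * Ce e xe - eta * (\<Sum>j\<in>e. l e j (xe j))"
    for l :: "'v set \<Rightarrow> 'v \<Rightarrow> 'x \<Rightarrow> real" and e and xe :: "'v \<Rightarrow> 'x"
  define Zv where "Zv l v = (\<Sum>x\<in>X. exp (fv l v x))" for l v
  define Ze where "Ze l e = (\<Sum>xe\<in>edge_labs e X. exp (ge l e xe))" for l e
  have Ld: "Ldual eta V E X Cv Ce l = (1/eta) * (\<Sum>v\<in>V. ln (Zv l v)) + (1/eta) * (\<Sum>e\<in>E. ln (Ze l e))" for l
    unfolding Ldual_def Zv_def fv_def Ze_def ge_def ..
  have fE: "finite E"
  proof -
    have "E \<subseteq> Pow V" using Ecard by auto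
    thus ?thesis by (rule finite_subset) (simp add: fV)
  qed
  have fe: "finite e" if "e \<in> E" for e using Ecard that card_ge_0_finite by force
  have NE: "N \<subseteq> E" and iN: "\<And>e. e \<in> N \<Longrightarrow> i \<in> e" unfolding N_def Nb_def by auto
  have fN: "finite N" using NE fE finite_subset by blast
  have Nne: "N \<noteq> {}" using Vcov iV unfolding N_def Nb_def by auto
  have k1: "k \<ge> 1" using fN Nne k_def by (simp add: Suc_leI card_gt_0_iff)
  have eN: "{} \<notin> N" using iN by blast
  have Xne: "X \<noteq> {}" using cX by auto
  have fEL: "finite (edge_labs e X)" if "e \<in> E" for e
    unfolding edge_labs_def using fe[OF that] fX by (simp add: finite_PiE)
  have ELX: "xe j \<in> X" if "xe \<in> edge_labs e X" "j \<in> e" for xe e j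
    using that unfolding edge_labs_def by (auto dest: PiE_mem)
  have wit: "restrict (\<lambda>_. x) e \<in> {xe \<in> edge_labs e X. xe i = x}" if "x \<in> X" "i \<in> e" for x e
    using that unfolding edge_labs_def by auto
  have ELne: "edge_labs e X \<noteq> {}" if "x \<in> X" "i \<in> e" for x e
    using wit[OF that] by blast
  have Zvpos: "Zv l v > 0" for l v
    unfolding Zv_def using fX Xne by (intro sum_pos) auto
  have Zepos: "Ze l e > 0" if "e \<in> N" for l e
  proof -
    obtain x where "x \<in> X" using Xne by blast
    thus ?thesis unfolding Ze_def using fEL NE that ELne iN by (intro sum_pos) auto
  qed
  have mu_eq: "mu x = exp (fv lam i x) / Zv lam i" for x
    unfolding mu_def mu_v_def Zv_def fv_def ..
  have mue_eq: "mu_e eta X Ce lam e xe = exp (ge lam e xe) / Ze lam e" for e xe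
    unfolding mu_e_def Ze_def ge_def ..
  have S_eq: "S e x = (\<Sum>xe\<in>{xe \<in> edge_labs e X. xe i = x}. exp (ge lam e xe)) / Ze lam e" for e x
    unfolding S_def Smarg_def mue_eq by (simp add: sum_divide_distrib)
  have mupos: "mu x > 0" for x unfolding mu_eq using Zvpos by simp
  have Spos: "S e x > 0" if "e \<in> N" "x \<in> X" for e x
  proof -
    have "0 < (\<Sum>xe\<in>{xe \<in> edge_labs e X. xe i = x}. exp (ge lam e xe))"
      using wit[OF that(2) iN[OF that(1)]] fEL[of e] NE that by (intro sum_pos) auto
    thus ?thesis unfolding S_eq using Zepos[OF that(1)] by simp
  qed
  have grp: "(\<Sum>x\<in>X. (\<Sum>xe\<in>{xe \<in> edge_labs e X. xe i = x}. F xe)) = (\<Sum>xe\<in>edge_labs e X. F xe)"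
    if "e \<in> N" for e and F :: "('v \<Rightarrow> 'x) \<Rightarrow> real"
    using that NE iN[OF that] ELX fEL fX by (intro sum.group) (auto intro: ELX)
  have Ssum: "(\<Sum>x\<in>X. S e x) = 1" if "e \<in> N" for e
  proof -
    have "(\<Sum>x\<in>X. S e x) = (\<Sum>x\<in>X. (\<Sum>xe\<in>{xe \<in> edge_labs e X. xe i = x}. exp (ge lam e xe))) / Ze lam e"
      unfolding S_eq by (simp add: sum_divide_distrib)
    also have "\<dots> = 1" unfolding grp[OF that] using Zepos[OF that, of lam] by (simp add: Ze_def)
    finally show ?thesis .
  qed
  have musum: "(\<Sum>x\<in>X. mu x) = 1"
    unfolding mu_eq using Zvpos[of lam i] by (simp add: sum_divide_distrib[symmetric] Zv_def)
  define G where "G x = (mu x * (\<Prod>e\<in>N. S e x)) powr (1 / (real k + 1))" for x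
  define ell where "ell x = ln (mu x * (\<Prod>e\<in>N. S e x)) / (real k + 1)" for x
  have Gell: "G x = exp (ell x)" if "x \<in> X" for x
  proof -
    have pp2: "(\<Prod>e\<in>N. S e x) > 0" using Spos that by (simp add: prod_pos)
    thus ?thesis unfolding G_def ell_def using mupos[of x] by (simp add: powr_def mult.commute)
  qed
  have lnprod: "ln (mu x * (\<Prod>e\<in>N. S e x)) = ln (mu x) + (\<Sum>e\<in>N. ln (S e x))" if "x \<in> X" for x
    using mupos Spos that fN by (simp add: ln_mult prod_pos ln_prod less_imp_neq[symmetric])
  have partA: "1 / (8 * real k) * (\<Sum>e\<in>N. (\<Sum>x\<in>X. \<bar>slack eta E X Cv Ce lam e i x\<bar>)^2)
      \<le> - (real k + 1) * ln (\<Sum>x\<in>X. G x)"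
  proof -
    define P where "P j x = (if j = {} then mu x else S j x)" for j x
    define J where "J = insert {} N"
    have cJ: "card J = k + 1" unfolding J_def k_def using fN eN by simp
    have fJ: "finite J" unfolding J_def using fN by simp
    have j0: "{} \<in> J" unfolding J_def by simp
    have JN: "J - {{}} = N" unfolding J_def using eN by auto
    have A: "- real (card J) * ln (\<Sum>x\<in>X. (\<Prod>j\<in>J. P j x) powr (1 / real (card J)))
     \<ge> 1 / (8 * real (card (J - {{}}))) * (\<Sum>j\<in>J - {{}}. (\<Sum>x\<in>X. \<bar>P j x - P {} x\<bar>)^2)"
    proof (rule lemA[OF fX fJ j0])
      show "2 \<le> card J" using cJ k1 by simp
      show "0 < P j x" if "j \<in> J" "x \<in> X" for j x
        using that mupos Spos unfolding P_def J_def by auto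
      show "(\<Sum>x\<in>X. P j x) = 1" if "j \<in> J" for j
        using that musum Ssum eN unfolding P_def J_def by (cases "j = {}") auto
    qed
    have prodJ: "(\<Prod>j\<in>J. P j x) = mu x * (\<Prod>e\<in>N. S e x)" for x
    proof -
      have "(\<Prod>j\<in>J. P j x) = P {} x * (\<Prod>j\<in>N. P j x)"
        unfolding J_def using fN eN by simp
      also have "(\<Prod>j\<in>N. P j x) = (\<Prod>e\<in>N. S e x)"
        using eN unfolding P_def by (intro prod.cong) auto
      finally show ?thesis unfolding P_def by simp
    qed
    have sl: "(\<Sum>j\<in>N. (\<Sum>x\<in>X. \<bar>P j x - P {} x\<bar>)^2) = (\<Sum>e\<in>N. (\<Sum>x\<in>X. \<bar>slack eta E X Cv Ce lam e i x\<bar>)^2)"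
    proof (intro sum.cong refl)
      fix e assume "e \<in> N"
      hence "e \<noteq> {}" using eN by auto
      thus "(\<Sum>x\<in>X. \<bar>P e x - P {} x\<bar>)^2 = (\<Sum>x\<in>X. \<bar>slack eta E X Cv Ce lam e i x\<bar>)^2"
        unfolding P_def slack_def S_def mu_def by simp
    qed
    have rc: "real (card J) = real k + 1" using cJ by simp
    show ?thesis using A unfolding JN sl prodJ rc G_def[symmetric] k_def[symmetric] by simp
  qed
  have partB: "Ldual eta V E X Cv Ce lam - Ldual eta V E X Cv Ce lam' = - (real k + 1) * ln (\<Sum>x\<in>X. G x) / eta"
  proof -
    have delta: "lam' e i x = lam e i x + (ln (S e x) - ell x) / eta" if "e \<in> N" for e x
    proof -
      have "lam' e i x = lam e i x + (1/eta) * ln (S e x) - 1 / (eta * (real k + 1)) * ln (mu x * (\<Prod>e'\<in>N. S e' x))"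
        using that unfolding lam'_def upd_def S_def mu_def k_def N_def by simp
      also have "\<dots> = lam e i x + (ln (S e x) - ln (mu x * (\<Prod>e'\<in>N. S e' x)) / (real k + 1)) / eta"
        using eta by (intro aux) auto
      finally show ?thesis unfolding ell_def .
    qed
    have same_v: "v \<noteq> i \<Longrightarrow> lam' e v x = lam e v x" for e v x by (simp add: lam'_def upd_def)
    have same_e: "e \<notin> N \<Longrightarrow> lam' e j x = lam e j x" for e j x by (simp add: lam'_def upd_def N_def)
    have Gp: "G x > 0" if "x \<in> X" for x using Gell[OF that] by simp
    have SGpos: "(\<Sum>x\<in>X. G x) > 0" using fX Xne Gp by (intro sum_pos) auto
    have fvi: "fv lam' i x = fv lam i x - ln (mu x) + ell x" if x: "x \<in> X" for x
    proof -
      have "(\<Sum>e\<in>N. lam' e i x) = (\<Sum>e\<in>N. lam e i x + (ln (S e x) - ell x) / eta)"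
        using delta by (intro sum.cong) auto
      also have "\<dots> = (\<Sum>e\<in>N. lam e i x) + ((\<Sum>e\<in>N. ln (S e x)) - real k * ell x) / eta"
        by (simp add: sum.distrib sum_divide_distrib[symmetric] sum_subtractf k_def)
      finally have s: "(\<Sum>e\<in>N. lam' e i x) = (\<Sum>e\<in>N. lam e i x) + ((\<Sum>e\<in>N. ln (S e x)) - real k * ell x) / eta" .
      have l: "(\<Sum>e\<in>N. ln (S e x)) = (real k + 1) * ell x - ln (mu x)"
        using lnprod[OF x] unfolding ell_def by simp
      show ?thesis unfolding fv_def N_def[symmetric] s l using eta by (simp add: field_simps)
    qed
    have Zvi: "Zv lam' i = Zv lam i * (\<Sum>x\<in>X. G x)"
    proof -
      have "Zv lam' i = (\<Sum>x\<in>X. Zv lam i * G x)" unfolding Zv_def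
      proof (rule sum.cong[OF refl])
        fix x assume x: "x \<in> X"
        have e1: "exp (fv lam i x) = Zv lam i * mu x" using mu_eq[of x] Zvpos[of lam i] by simp
        have "exp (fv lam' i x) = exp (fv lam i x) * exp (ell x) / mu x"
          unfolding fvi[OF x] using mupos[of x] by (simp add: exp_add exp_diff)
        thus "exp (fv lam' i x) = (\<Sum>x\<in>X. exp (fv lam i x)) * G x"
          unfolding e1 Gell[OF x] using mupos[of x] by (simp add: Zv_def)
      qed
      thus ?thesis by (simp add: sum_distrib_left)
    qed
    have Zvo: "Zv lam' v = Zv lam v" if "v \<noteq> i" for v
      unfolding Zv_def fv_def using same_v[OF that] by simp
    have gee: "ge lam' e xe = ge lam e xe - ln (S e (xe i)) + ell (xe i)" if e: "e \<in> N" for e xe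
    proof -
      have eE: "e \<in> E" using e NE by auto
      have "(\<Sum>j\<in>e. lam' e j (xe j)) = lam' e i (xe i) + (\<Sum>j\<in>e - {i}. lam' e j (xe j))"
        using fe[OF eE] iN[OF e] by (simp add: sum.remove)
      also have "(\<Sum>j\<in>e - {i}. lam' e j (xe j)) = (\<Sum>j\<in>e - {i}. lam e j (xe j))"
        using same_v by (intro sum.cong) auto
      also have "lam' e i (xe i) + (\<Sum>j\<in>e - {i}. lam e j (xe j)) = (\<Sum>j\<in>e. lam e j (xe j)) + (ln (S e (xe i)) - ell (xe i)) / eta"
        using delta[OF e] fe[OF eE] iN[OF e] by (simp add: sum.remove)
      finally have s: "(\<Sum>j\<in>e. lam' e j (xe j)) = (\<Sum>j\<in>e. lam e j (xe j)) + (ln (S e (xe i)) - ell (xe i)) / eta" .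
      show ?thesis unfolding ge_def s using eta by (simp add: field_simps)
    qed
    have Zee: "Ze lam' e = Ze lam e * (\<Sum>x\<in>X. G x)" if e: "e \<in> N" for e
    proof -
      have "Ze lam' e = (\<Sum>xe\<in>edge_labs e X. exp (ge lam e xe) * (G (xe i) / S e (xe i)))"
        unfolding Ze_def
      proof (rule sum.cong[OF refl])
        fix xe assume xe: "xe \<in> edge_labs e X"
        have xi: "xe i \<in> X" using ELX[OF xe iN[OF e]] .
        show "exp (ge lam' e xe) = exp (ge lam e xe) * (G (xe i) / S e (xe i))"
          unfolding gee[OF e] Gell[OF xi] using Spos[OF e xi] by (simp add: exp_add exp_diff)
      qed
      also have "\<dots> = (\<Sum>x\<in>X. (\<Sum>xe\<in>{xe \<in> edge_labs e X. xe i = x}. exp (ge lam e xe) * (G (xe i) / S e (xe i))))"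
        by (rule grp[OF e, symmetric])
      also have "\<dots> = (\<Sum>x\<in>X. (\<Sum>xe\<in>{xe \<in> edge_labs e X. xe i = x}. exp (ge lam e xe)) * (G x / S e x))"
      proof (intro sum.cong refl)
        fix x assume "x \<in> X"
        have "(\<Sum>xe\<in>{xe \<in> edge_labs e X. xe i = x}. exp (ge lam e xe) * (G (xe i) / S e (xe i)))
            = (\<Sum>xe\<in>{xe \<in> edge_labs e X. xe i = x}. exp (ge lam e xe) * (G x / S e x))"
          by (intro sum.cong refl) auto
        also have "\<dots> = (\<Sum>xe\<in>{xe \<in> edge_labs e X. xe i = x}. exp (ge lam e xe)) * (G x / S e x)"
          by (rule sum_distrib_right[symmetric])
        finally show "(\<Sum>xe\<in>{xe \<in> edge_labs e X. xe i = x}. exp (ge lam e xe) * (G (xe i) / S e (xe i)))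
            = (\<Sum>xe\<in>{xe \<in> edge_labs e X. xe i = x}. exp (ge lam e xe)) * (G x / S e x)" .
      qed
      also have "\<dots> = (\<Sum>x\<in>X. Ze lam e * G x)"
      proof (intro sum.cong refl)
        fix x assume x: "x \<in> X"
        have "(\<Sum>xe\<in>{xe \<in> edge_labs e X. xe i = x}. exp (ge lam e xe)) = S e x * Ze lam e"
          using S_eq[of e x] Zepos[OF e, of lam] by simp
        thus "(\<Sum>xe\<in>{xe \<in> edge_labs e X. xe i = x}. exp (ge lam e xe)) * (G x / S e x) = Ze lam e * G x"
          using Spos[OF e x] by simp
      qed
      finally show ?thesis by (simp add: sum_distrib_left)
    qed
    have Zeo: "Ze lam' e = Ze lam e" if "e \<notin> N" for e
      unfolding Ze_def ge_def using same_e[OF that] by simp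
    have VS: "(\<Sum>v\<in>V. ln (Zv lam v)) - (\<Sum>v\<in>V. ln (Zv lam' v)) = - ln (\<Sum>x\<in>X. G x)"
    proof -
      have "(\<Sum>v\<in>V. ln (Zv lam' v)) = ln (Zv lam' i) + (\<Sum>v\<in>V - {i}. ln (Zv lam' v))"
        using fV iV by (simp add: sum.remove)
      also have "(\<Sum>v\<in>V - {i}. ln (Zv lam' v)) = (\<Sum>v\<in>V - {i}. ln (Zv lam v))"
        using Zvo by (intro sum.cong) auto
      also have "ln (Zv lam' i) = ln (Zv lam i) + ln (\<Sum>x\<in>X. G x)"
        unfolding Zvi using Zvpos[of lam i] SGpos by (simp add: ln_mult)
      finally show ?thesis using fV iV by (simp add: sum.remove)
    qed
    have ES: "(\<Sum>e\<in>E. ln (Ze lam e)) - (\<Sum>e\<in>E. ln (Ze lam' e)) = - real k * ln (\<Sum>x\<in>X. G x)"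
    proof -
      have "(\<Sum>e\<in>E. ln (Ze lam e)) - (\<Sum>e\<in>E. ln (Ze lam' e)) = (\<Sum>e\<in>E. ln (Ze lam e) - ln (Ze lam' e))"
        by (simp add: sum_subtractf)
      also have "\<dots> = (\<Sum>e\<in>E. if e \<in> N then - ln (\<Sum>x\<in>X. G x) else 0)"
      proof (intro sum.cong refl)
        fix e assume "e \<in> E"
        show "ln (Ze lam e) - ln (Ze lam' e) = (if e \<in> N then - ln (\<Sum>x\<in>X. G x) else 0)"
        proof (cases "e \<in> N")
          case True
          thus ?thesis unfolding Zee[OF True] using Zepos[OF True, of lam] SGpos by (simp add: ln_mult)
        qed (simp add: Zeo)
      qed
      also have "\<dots> = (\<Sum>e\<in>E \<inter> N. - ln (\<Sum>x\<in>X. G x))"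
        by (rule sum.inter_restrict[OF fE, of "\<lambda>_. - ln (\<Sum>x\<in>X. G x)" N, symmetric])
      also have "E \<inter> N = N" using NE by auto
      finally show ?thesis by (simp add: k_def)
    qed
    have "Ldual eta V E X Cv Ce lam - Ldual eta V E X Cv Ce lam'
        = (1/eta) * ((\<Sum>v\<in>V. ln (Zv lam v)) - (\<Sum>v\<in>V. ln (Zv lam' v)))
          + (1/eta) * ((\<Sum>e\<in>E. ln (Ze lam e)) - (\<Sum>e\<in>E. ln (Ze lam' e)))"
      unfolding Ld by (simp add: algebra_simps)
    also have "\<dots> = - (real k + 1) * ln (\<Sum>x\<in>X. G x) / eta"
      unfolding VS ES using eta by (simp add: field_simps)
    finally show ?thesis .
  qed
  show ?thesis unfolding lam'_def[symmetric] partB N_def[symmetric] k_def[symmetric]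
    using partA eta by (simp add: field_simps)
qed
end
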